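(* Suppose that $$\frac{\Gamma,\rho\dashv\sigma\vartriangleright\rho_1\dashv\sigma_1\quad\cdots\quad\Gamma,\rho\dashv\sigma\vartriangleright\rho_n\dashv\sigma_n}{\Gamma\vartriangleright\rho\dashv\sigma}$$ is an instance of rule $(+,+)$, $(\oplus,+)$ or $(+,\oplus)$ of the formal system for compliance. Then for all histories $\vec\delta,\vec\gamma$ and for all $i=1,\dots,n$ there exist histories $\vec\delta_i,\vec\gamma_i$ such that $\langle\vec\delta,\rho\rangle\parallel\langle\vec\gamma,\sigma\rangle$ reduces in zero or more steps to $\langle\vec\delta_i,\rho_i\rangle\parallel\langle\vec\gamma_i,\sigma_i\rangle$ by a reduction sequence in which rule (rbk) is never used.
   Context: Let $\mathcal N$ be a countable set of names and $\overline{\mathcal N}=\{\bar a\mid a\in\mathcal N\}$ a disjoint set of conames; $\alpha$ ranges over $\mathcal N\cup\overline{\mathcal N}$, with $\bar{\bar a}=a$. Retractable contracts are the closed expressions generated by $\sigma ::= \mathbf 1 \mid \sum_{i\in I} a_i.\sigma_i \ (\text{input}) \mid \sum_{i\in I}\bar a_i.\sigma_i\ (\text{retractable output}) \mid \bigoplus_{i\in I}\bar a_i.\sigma_i\ (\text{unretractable output}) \mid x \mid \mathsf{rec}\,x.\sigma$, where $I$ is non-empty and finite, names/conames in each choice are pairwise distinct, and $\sigma$ is not a variable in $\mathsf{rec}\,x.\sigma$. Choices are commutative; $\mathsf{rec}\,x.\sigma$ is identified with $\sigma[\mathsf{rec}\,x.\sigma/x]$. A unary $\bar a.\sigma$ may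 be read as either kind of output. Histories are stacks $\vec\gamma ::= [\,] \mid \vec\gamma:\sigma$ with $\sigma$ a retractable contract or the special symbol $\circ$. A contract with history is a pair $\langle\vec\gamma,\sigma\rangle$ with $\sigma$ a contract or $\circ$. Transitions: $\langle\vec\gamma,\alpha.\sigma+\sigma'\rangle\xrightarrow{\alpha}\langle\vec\gamma:\sigma',\sigma\rangle$ (for retractable choices, $+$ being input or retractable output sum); $\langle\vec\gamma,\bar a.\sigma\oplus\sigma'\rangle\xrightarrow{\tau}\langle\vec\gamma,\bar a.\sigma\rangle$; $\langle\vec\gamma,\alpha.\sigma\rangle\xrightarrow{\alpha}\langle\vec\gamma:\circ,\sigma\rangle$; $\langle\vec\gamma:\sigma',\sigma\rangle\xrightarrow{\mathsf{rb}}\langle\vec\gamma,\sigma'\rangle$. Client/server pairs $\langle\vec\delta,\rho\rangle\parallel\langle\vec\gamma,\sigma\rangle$ reduce by: (comm) if $\langle\vec\delta,\rho\rangle\xrightarrow{\alpha}\langle\vec\delta',\rho'\rangle$ and $\langle\vec\gamma,\sigma\rangle\xrightarrow{\bar\alpha}\langle\vec\gamma',\sigma'\rangle$ then the pair reduces to $\langle\vec\delta',\rho'\rangle\parallel\langle\vec\gamma',\sigma'\rangle$; ($\tau$) a $\tau$-transition of either component alone; (rbk) if both components do an $\mathsf{rb}$ transition and $\rho\neq\mathbf 1$, both roll back simultaneously; rule (rbk) applies only if neither (comm) nor ($\tau$) applies. Rules of the formal system (judgments $\Gamma\vartriangleright\rho\dashv\sigma$, $\Gamma$ a set of expressions $\rho'\dashv\sigma'$;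 applied modulo fold/unfold of recursion): $(+,+)$ if $\rho=\sum_{i\in I}\alpha_i.\rho_i$, $\sigma=\sum_{j\in J}\bar\alpha_j.\sigma_j$ are retractable choices and $k\in I\cap J$, from $\Gamma,\rho\dashv\sigma\vartriangleright\rho_k\dashv\sigma_k$ infer $\Gamma\vartriangleright\rho\dashv\sigma$; $(\oplus,+)$ from $\Gamma,\bigoplus_{i\in I}\bar a_i.\rho_i\dashv\sum_{j\in I\cup J}a_j.\sigma_j\vartriangleright\rho_i\dashv\sigma_i$ for all $i\in I$ infer $\Gamma\vartriangleright\bigoplus_{i\in I}\bar a_i.\rho_i\dashv\sum_{j\in I\cup J}a_j.\sigma_j$; $(+,\oplus)$ from $\Gamma,\sum_{j\in I\cup J}a_j.\sigma_j\dashv\bigoplus_{i\in I}\bar a_i.\rho_i\vartriangleright\rho_i\dashv\sigma_i$ for all $i\in I$ infer $\Gamma\vartriangleright\sum_{j\in I\cup J}a_j.\sigma_j\dashv\bigoplus_{i\in I}\bar a_i.\rho_i$. *)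

theory Defs
  imports Main
begin

text \<open>A choice is a non-empty list of (name, continuation) pairs (order irrelevant:
  every construction below picks an arbitrary member of the list).\<close>

datatype 'n ctr =
    One
  | InS "('n \<times> 'n ctr) list"
  | ROut "('n \<times> 'n ctr) list"    \<comment> \<open>retractable output sum  \<Sum> abar_i.\<sigma>_i\<close>
  | UOut "('n \<times> 'n ctr) list"    \<comment> \<open>unretractable output  \<Oplus> abar_i.\<sigma>_i\<close>
  | Var nat
  | Rec nat "'n ctr"

datatype 'n act = N 'n | Co 'n

fun dual :: "'n act \<Rightarrow> 'n act" where
  "dual (N a) = Co a"
| "dual (Co a) = N a"

fun fv :: "'n ctr \<Rightarrow> nat set" where
  "fv One = {}"
| "fv (InS xs) = (\<Union>p\<in>set xs. fv (snd p))"
| "fv (ROut xs) = (\<Union>p\<in>set xs. fv (snd p))"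
| "fv (UOut xs) = (\<Union>p\<in>set xs. fv (snd p))"
| "fv (Var x) = {x}"
| "fv (Rec x b) = fv b - {x}"

fun ok :: "'n ctr \<Rightarrow> bool" where
  "ok One = True"
| "ok (InS xs) = (xs \<noteq> [] \<and> distinct (map fst xs) \<and> (\<forall>p\<in>set xs. ok (snd p)))"
| "ok (ROut xs) = (xs \<noteq> [] \<and> distinct (map fst xs) \<and> (\<forall>p\<in>set xs. ok (snd p)))"
| "ok (UOut xs) = (xs \<noteq> [] \<and> distinct (map fst xs) \<and> (\<forall>p\<in>set xs. ok (snd p)))"
| "ok (Var x) = True"
| "ok (Rec x b) = ((\<forall>y. b \<noteq> Var y) \<and> ok b)"

definition contract :: "'n ctr \<Rightarrow> bool" where
  "contract s \<longleftrightarrow> ok s \<and> fv s = {}"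

text \<open>Substitution of a closed contract u for variable x.\<close>
fun subst :: "nat \<Rightarrow> 'n ctr \<Rightarrow> 'n ctr \<Rightarrow> 'n ctr" where
  "subst x u One = One"
| "subst x u (InS xs) = InS (map (\<lambda>(a,t). (a, subst x u t)) xs)"
| "subst x u (ROut xs) = ROut (map (\<lambda>(a,t). (a, subst x u t)) xs)"
| "subst x u (UOut xs) = UOut (map (\<lambda>(a,t). (a, subst x u t)) xs)"
| "subst x u (Var y) = (if x = y then u else Var y)"
| "subst x u (Rec y b) = (if x = y then Rec y b else Rec y (subst x u b))"

inductive unf :: "'n ctr \<Rightarrow> 'n ctr \<Rightarrow> bool" where
  unf_refl: "unf s s"
| unf_rec: "unf (subst x (Rec x b) b) s \<Longrightarrow> unf (Rec x b) s"

text \<open>View of a contract as a retractable choice (input sum, retractable output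
  sum, or a unary output which may be read as either kind).\<close>
fun rview :: "'n ctr \<Rightarrow> ('n act \<times> 'n ctr) list option" where
  "rview (InS xs) = Some (map (\<lambda>(a,t). (N a, t)) xs)"
| "rview (ROut xs) = Some (map (\<lambda>(a,t). (Co a, t)) xs)"
| "rview (UOut [p]) = Some [(Co (fst p), snd p)]"
| "rview _ = None"

text \<open>View of a contract as an unretractable output choice (unary retractable
  outputs may be read as unretractable ones).\<close>
fun uview :: "'n ctr \<Rightarrow> ('n \<times> 'n ctr) list option" where
  "uview (UOut xs) = Some xs"
| "uview (ROut [p]) = Some [p]"
| "uview _ = None"

datatype 'n hel = Circ | C "'n ctr"

type_synonym 'n hist = "'n hel list"   \<comment> \<open>stack, top = head of the list\<close>
type_synonym 'n hstate = "'n hist \<times> 'n hel"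

datatype 'n lbl = Act "'n act" | Tau | Rb

inductive hstep :: "'n hstate \<Rightarrow> 'n lbl \<Rightarrow> 'n hstate \<Rightarrow> bool" where
  in_sum: "\<lbrakk>unf s (InS xs); xs = ys @ (a,t) # zs; ys @ zs \<noteq> []\<rbrakk>
     \<Longrightarrow> hstep (g, C s) (Act (N a)) (C (InS (ys @ zs)) # g, C t)"
| rout_sum: "\<lbrakk>unf s (ROut xs); xs = ys @ (a,t) # zs; ys @ zs \<noteq> []\<rbrakk>
     \<Longrightarrow> hstep (g, C s) (Act (Co a)) (C (ROut (ys @ zs)) # g, C t)"
| tau: "\<lbrakk>unf s (UOut xs); (a,t) \<in> set xs; length xs \<ge> 2\<rbrakk>
     \<Longrightarrow> hstep (g, C s) Tau (g, C (UOut [(a,t)]))"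
| in_unary: "unf s (InS [(a,t)]) \<Longrightarrow> hstep (g, C s) (Act (N a)) (Circ # g, C t)"
| rout_unary: "unf s (ROut [(a,t)]) \<Longrightarrow> hstep (g, C s) (Act (Co a)) (Circ # g, C t)"
| uout_unary: "unf s (UOut [(a,t)]) \<Longrightarrow> hstep (g, C s) (Act (Co a)) (Circ # g, C t)"
| rb: "hstep (h # g, x) Rb (g, h)"

type_synonym 'n cs = "'n hstate \<times> 'n hstate"   \<comment> \<open>(client, server)\<close>

datatype rl = Comm | TauR | Rbk

inductive red_ct :: "'n cs \<Rightarrow> rl \<Rightarrow> 'n cs \<Rightarrow> bool" where
  comm: "\<lbrakk>hstep c (Act \<alpha>) c'; hstep s (Act (dual \<alpha>)) s'\<rbrakk> \<Longrightarrow> red_ct (c, s) Comm (c', s')"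
| tau_l: "hstep c Tau c' \<Longrightarrow> red_ct (c, s) TauR (c', s)"
| tau_r: "hstep s Tau s' \<Longrightarrow> red_ct (c, s) TauR (c, s')"

inductive red :: "'n cs \<Rightarrow> rl \<Rightarrow> 'n cs \<Rightarrow> bool" where
  red_ct: "red_ct x r y \<Longrightarrow> red x r y"
| rbk: "\<lbrakk>hstep c Rb c'; hstep s Rb s'; snd c \<noteq> C One; \<not> (\<exists>r y. red_ct (c, s) r y)\<rbrakk>
     \<Longrightarrow> red (c, s) Rbk (c', s')"

definition red_no_rbk :: "'n cs \<Rightarrow> 'n cs \<Rightarrow> bool" where
  "red_no_rbk x y \<longleftrightarrow> (\<exists>r. r \<noteq> Rbk \<and> red x r y)"

type_synonym 'n env = "('n ctr \<times> 'n ctr) set"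

text \<open>rule_inst G \<rho> \<sigma> ps: there is an instance of one of the three rules with
  conclusion G \<rhd> \<rho> \<dashv> \<sigma> and premises ps (list of (environment, client, server)),
  applied modulo unfolding of \<rho> and \<sigma>.\<close>
inductive rule_inst :: "'n env \<Rightarrow> 'n ctr \<Rightarrow> 'n ctr \<Rightarrow> ('n env \<times> 'n ctr \<times> 'n ctr) list \<Rightarrow> bool" where
  plus_plus: "\<lbrakk>unf \<rho> \<rho>0; unf \<sigma> \<sigma>0; rview \<rho>0 = Some xs; rview \<sigma>0 = Some ys;
      (\<alpha>, \<rho>k) \<in> set xs; (dual \<alpha>, \<sigma>k) \<in> set ys\<rbrakk>
    \<Longrightarrow> rule_inst G \<rho> \<sigma> [(insert (\<rho>, \<sigma>) G, \<rho>k, \<sigma>k)]"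
| oplus_plus: "\<lbrakk>unf \<rho> \<rho>0; unf \<sigma> (InS ys); uview \<rho>0 = Some xs;
      set (map fst xs) \<subseteq> set (map fst ys);
      list_all2 (\<lambda>(a, \<rho>a) (G', \<rho>', \<sigma>'). G' = insert (\<rho>, \<sigma>) G \<and> \<rho>' = \<rho>a \<and> (a, \<sigma>') \<in> set ys) xs ps\<rbrakk>
    \<Longrightarrow> rule_inst G \<rho> \<sigma> ps"
| plus_oplus: "\<lbrakk>unf \<rho> (InS ys); unf \<sigma> \<sigma>0; uview \<sigma>0 = Some xs;
      set (map fst xs) \<subseteq> set (map fst ys);
      list_all2 (\<lambda>(a, \<sigma>a) (G', \<rho>', \<sigma>'). G' = insert (\<rho>, \<sigma>) G \<and> \<sigma>' = \<sigma>a \<and> (a, \<rho>') \<in> set ys) xs ps\<rbrakk>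
    \<Longrightarrow> rule_inst G \<rho> \<sigma> ps"

definition history :: "'n hist \<Rightarrow> bool" where
  "history h \<longleftrightarrow> (\<forall>e\<in>set h. e = Circ \<or> (\<exists>s. e = C s \<and> contract s))"

end

theory Submission
  imports Defs
begin

lemma in_step:
  assumes "unf s (InS xs)" "(a,t) \<in> set xs"
  shows "\<exists>g'. hstep (g, C s) (Act (N a)) (g', C t)"
proof -
  obtain ys zs where xs: "xs = ys @ (a,t) # zs" using assms(2) by (metis split_list)
  show ?thesis
  proof (cases "ys @ zs = []")
    case True
    then have "xs = [(a,t)]" using xs by simp
    then show ?thesis using assms(1) by (metis in_unary)
  next
    case False
    then show ?thesis using assms(1) xs by (metis in_sum)
  qed
qed

lemma rout_step:
  assumes "unf s (ROut xs)" "(a,t) \<in> set xs"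
  shows "\<exists>g'. hstep (g, C s) (Act (Co a)) (g', C t)"
proof -
  obtain ys zs where xs: "xs = ys @ (a,t) # zs" using assms(2) by (metis split_list)
  show ?thesis
  proof (cases "ys @ zs = []")
    case True
    then have "xs = [(a,t)]" using xs by simp
    then show ?thesis using assms(1) by (metis rout_unary)
  next
    case False
    then show ?thesis using assms(1) xs by (metis rout_sum)
  qed
qed

lemma rview_step:
  assumes "unf s s0" "rview s0 = Some xs" "(\<alpha>,t) \<in> set xs"
  shows "\<exists>g'. hstep (g, C s) (Act \<alpha>) (g', C t)"
proof (cases s0 rule: rview.cases)
  case (1 ys)
  with assms obtain a where "\<alpha> = N a" "(a,t) \<in> set ys" by auto
  then show ?thesis using in_step assms(1) 1 by metis
next
  case (2 ys)
  with assms obtain a where "\<alpha> = Co a" "(a,t) \<in> set ys" by auto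
  then show ?thesis using rout_step assms(1) 2 by metis
next
  case (3 p)
  with assms have "\<alpha> = Co (fst p)" "t = snd p" by auto
  then show ?thesis using assms(1) 3 uout_unary[of s "fst p" "snd p" g] by auto
qed (use assms in auto)

lemma uview_client:
  assumes "unf s s0" "uview s0 = Some xs" "(a,t) \<in> set xs"
    and "hstep S (Act (N a)) S'"
  shows "\<exists>g'. red_no_rbk\<^sup>*\<^sup>* ((g, C s), S) ((g', C t), S')"
proof (cases s0 rule: uview.cases)
  case (1 ys)
  then have u: "unf s (UOut xs)" using assms by auto
  show ?thesis
  proof (cases "length xs \<ge> 2")
    case True
    have r1: "red_no_rbk ((g, C s), S) ((g, C (UOut [(a,t)])), S)"
      unfolding red_no_rbk_def
      by (rule exI[of _ TauR]) (auto intro!: red.red_ct red_ct.tau_l hstep.tau[OF u assms(3) True])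
    have "hstep (g, C (UOut [(a,t)])) (Act (Co a)) (Circ # g, C t)"
      by (rule uout_unary) (rule unf_refl)
    then have r2: "red_no_rbk ((g, C (UOut [(a,t)])), S) ((Circ # g, C t), S')"
      unfolding red_no_rbk_def using assms(4)
      by (intro exI[of _ Comm]) (auto intro!: red.red_ct red_ct.comm[where \<alpha>="Co a"])
    show ?thesis using r1 r2 by (meson converse_rtranclp_into_rtranclp r_into_rtranclp)
  next
    case False
    then have "xs = [(a,t)]" using assms(3) by (cases xs; cases "tl xs"; auto)
    then have "hstep (g, C s) (Act (Co a)) (Circ # g, C t)" using u by (metis uout_unary)
    then have "red_no_rbk ((g, C s), S) ((Circ # g, C t), S')"
      unfolding red_no_rbk_def using assms(4)
      by (intro exI[of _ Comm]) (auto intro!: red.red_ct red_ct.comm[where \<alpha>="Co a"])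
    then show ?thesis by blast
  qed
next
  case (2 p)
  then have "xs = [p]" "unf s (ROut [(a,t)])" using assms by auto
  then have "hstep (g, C s) (Act (Co a)) (Circ # g, C t)" by (metis rout_unary)
  then have "red_no_rbk ((g, C s), S) ((Circ # g, C t), S')"
    unfolding red_no_rbk_def using assms(4)
    by (intro exI[of _ Comm]) (auto intro!: red.red_ct red_ct.comm[where \<alpha>="Co a"])
  then show ?thesis by blast
qed (use assms in auto)

lemma uview_server:
  assumes "unf s s0" "uview s0 = Some xs" "(a,t) \<in> set xs"
    and "hstep S (Act (N a)) S'"
  shows "\<exists>g'. red_no_rbk\<^sup>*\<^sup>* (S, (g, C s)) (S', (g', C t))"
proof (cases s0 rule: uview.cases)
  case (1 ys)
  then have u: "unf s (UOut xs)" using assms by auto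
  show ?thesis
  proof (cases "length xs \<ge> 2")
    case True
    have r1: "red_no_rbk (S, (g, C s)) (S, (g, C (UOut [(a,t)])))"
      unfolding red_no_rbk_def
      by (rule exI[of _ TauR]) (auto intro!: red.red_ct red_ct.tau_r hstep.tau[OF u assms(3) True])
    have "hstep (g, C (UOut [(a,t)])) (Act (Co a)) (Circ # g, C t)"
      by (rule uout_unary) (rule unf_refl)
    then have r2: "red_no_rbk (S, (g, C (UOut [(a,t)]))) (S', (Circ # g, C t))"
      unfolding red_no_rbk_def using assms(4)
      by (intro exI[of _ Comm]) (auto intro!: red.red_ct red_ct.comm[where \<alpha>="N a"])
    show ?thesis using r1 r2 by (meson converse_rtranclp_into_rtranclp r_into_rtranclp)
  next
    case False
    then have "xs = [(a,t)]" using assms(3) by (cases xs; cases "tl xs"; auto)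
    then have "hstep (g, C s) (Act (Co a)) (Circ # g, C t)" using u by (metis uout_unary)
    then have "red_no_rbk (S, (g, C s)) (S', (Circ # g, C t))"
      unfolding red_no_rbk_def using assms(4)
      by (intro exI[of _ Comm]) (auto intro!: red.red_ct red_ct.comm[where \<alpha>="N a"])
    then show ?thesis by blast
  qed
next
  case (2 p)
  then have "xs = [p]" "unf s (ROut [(a,t)])" using assms by auto
  then have "hstep (g, C s) (Act (Co a)) (Circ # g, C t)" by (metis rout_unary)
  then have "red_no_rbk (S, (g, C s)) (S', (Circ # g, C t))"
    unfolding red_no_rbk_def using assms(4)
    by (intro exI[of _ Comm]) (auto intro!: red.red_ct red_ct.comm[where \<alpha>="N a"])
  then show ?thesis by blast
qed (use assms in auto)

theorem lemma2:
  fixes G :: "'n env" and \<rho> \<sigma> :: "'n ctr"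
    and ps :: "('n env \<times> 'n ctr \<times> 'n ctr) list"
  assumes "contract \<rho>" and "contract \<sigma>"
    and "rule_inst G \<rho> \<sigma> ps"
  shows "\<forall>\<delta> \<gamma>. history \<delta> \<longrightarrow> history \<gamma> \<longrightarrow>
           (\<forall>i < length ps. \<exists>\<delta>i \<gamma>i.
              red_no_rbk\<^sup>*\<^sup>* ((\<delta>, C \<rho>), (\<gamma>, C \<sigma>))
                ((\<delta>i, C (fst (snd (ps ! i)))), (\<gamma>i, C (snd (snd (ps ! i))))))"
proof (intro allI impI)
  fix \<delta> \<gamma> i assume i: "i < length ps"
  from assms(3) show "\<exists>\<delta>i \<gamma>i.
              red_no_rbk\<^sup>*\<^sup>* ((\<delta>, C \<rho>), (\<gamma>, C \<sigma>))
                ((\<delta>i, C (fst (snd (ps ! i)))), (\<gamma>i, C (snd (snd (ps ! i)))))"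
  proof cases
    case (plus_plus \<rho>0 \<sigma>0 xs ys \<alpha> \<rho>k \<sigma>k)
    obtain d' where d: "hstep (\<delta>, C \<rho>) (Act \<alpha>) (d', C \<rho>k)"
      using rview_step plus_plus by metis
    obtain g' where g: "hstep (\<gamma>, C \<sigma>) (Act (dual \<alpha>)) (g', C \<sigma>k)"
      using rview_step plus_plus by metis
    have "red_no_rbk ((\<delta>, C \<rho>), (\<gamma>, C \<sigma>)) ((d', C \<rho>k), (g', C \<sigma>k))"
      unfolding red_no_rbk_def using d g
      by (intro exI[of _ Comm]) (auto intro!: red.red_ct red_ct.comm)
    then show ?thesis using plus_plus i by auto
  next
    case (oplus_plus \<rho>0 ys xs)
    have la: "(\<lambda>(a, \<rho>a) (G', \<rho>', \<sigma>'). G' = insert (\<rho>, \<sigma>) G \<and> \<rho>' = \<rho>a \<and> (a, \<sigma>') \<in> set ys) (xs ! i) (ps ! i)"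
      using list_all2_nthD[OF oplus_plus(5)] i list_all2_lengthD[OF oplus_plus(5)] by auto
    obtain a ra where xi: "xs ! i = (a, ra)" by (cases "xs ! i")
    obtain G' r' s' where pi: "ps ! i = (G', r', s')" by (cases "ps ! i") auto
    have mem: "(a, ra) \<in> set xs" using xi i list_all2_lengthD[OF oplus_plus(5)] by (metis nth_mem)
    from la xi pi have r': "r' = ra" and ys: "(a, s') \<in> set ys" by auto
    obtain g' where g: "hstep (\<gamma>, C \<sigma>) (Act (N a)) (g', C s')"
      using in_step[OF oplus_plus(2) ys] by blast
    obtain d' where "red_no_rbk\<^sup>*\<^sup>* ((\<delta>, C \<rho>), (\<gamma>, C \<sigma>)) ((d', C ra), (g', C s'))"
      using uview_client[OF oplus_plus(1,3) mem g] by blast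
    then show ?thesis using pi r' by auto
  next
    case (plus_oplus ys \<sigma>0 xs)
    have la: "(\<lambda>(a, \<sigma>a) (G', \<rho>', \<sigma>'). G' = insert (\<rho>, \<sigma>) G \<and> \<sigma>' = \<sigma>a \<and> (a, \<rho>') \<in> set ys) (xs ! i) (ps ! i)"
      using list_all2_nthD[OF plus_oplus(5)] i list_all2_lengthD[OF plus_oplus(5)] by auto
    obtain a sa where xi: "xs ! i = (a, sa)" by (cases "xs ! i")
    obtain G' r' s' where pi: "ps ! i = (G', r', s')" by (cases "ps ! i") auto
    have mem: "(a, sa) \<in> set xs" using xi i list_all2_lengthD[OF plus_oplus(5)] by (metis nth_mem)
    from la xi pi have s': "s' = sa" and ys: "(a, r') \<in> set ys" by auto
    obtain d' where d: "hstep (\<delta>, C \<rho>) (Act (N a)) (d', C r')"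
      using in_step[OF plus_oplus(1) ys] by blast
    obtain g' where "red_no_rbk\<^sup>*\<^sup>* ((\<delta>, C \<rho>), (\<gamma>, C \<sigma>)) ((d', C r'), (g', C sa))"
      using uview_server[OF plus_oplus(2,3) mem d] by blast
    then show ?thesis using pi s' by auto
  qed
qed

end
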